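(* Let $p,q\in\mathscr P(\mathbb C)$ with $p(z)\le q(z)$ for every $z\in\mathbb C$. Then $\mathcal F^{p(\cdot)}\subset\mathcal F^{q(\cdot)}$, and there is a constant $M>0$ such that $\|f\|_{\mathcal F^{q(\cdot)}}\le M\|f\|_{\mathcal F^{p(\cdot)}}$ for every $f\in\mathcal F^{p(\cdot)}$.
   Context: $A$ denotes Lebesgue area measure on $\mathbb C$. A variable exponent is a measurable function $p:\mathbb C\to[1,\infty)$; $p^+=\operatorname{ess\,sup}_{\mathbb C}p$, and $\mathscr P(\mathbb C)$ is the set of variable exponents with $p^+<\infty$. For such $p$, $\mathcal L^{p(\cdot)}$ is the space of measurable $f:\mathbb C\to\mathbb C$ such that $\int_{\mathbb C}(\lambda|f(z)|)^{p(z)}e^{-p(z)|z|^2}\,dA(z)<\infty$ for some $\lambda>0$, normed by $\|f\|_{\mathcal L^{p(\cdot)}}=\inf\{\lambda>0:\int_{\mathbb C}(|f(z)|/\lambda)^{p(z)}e^{-p(z)|z|^2}\,dA(z)\le1\}$. The variable exponent Fock space $\mathcal F^{p(\cdot)}$ is the set of entire functions belonging to $\mathcal L^{p(\cdot)}$, with the same norm. *)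

theory Defs
  imports "HOL-Analysis.Analysis"
begin

definition var_exponent :: "(complex \<Rightarrow> real) \<Rightarrow> bool" where
  "var_exponent p \<longleftrightarrow> p \<in> borel_measurable lborel \<and> (\<forall>z. 1 \<le> p z)"

definition var_exponent_bdd :: "(complex \<Rightarrow> real) \<Rightarrow> bool" where
  "var_exponent_bdd p \<longleftrightarrow> var_exponent p \<and>
     (\<exists>C. AE z in lborel. p z \<le> C)"

definition fock_modular :: "(complex \<Rightarrow> real) \<Rightarrow> (complex \<Rightarrow> complex) \<Rightarrow> ennreal" where
  "fock_modular p f =
     (\<integral>\<^sup>+ z. ennreal ((cmod (f z)) powr (p z) * exp (- p z * (cmod z)\<^sup>2)) \<partial>lborel)"

definition Lp_var :: "(complex \<Rightarrow> real) \<Rightarrow> (complex \<Rightarrow> complex) set" where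
  "Lp_var p = {f. f \<in> borel_measurable lborel \<and>
      (\<exists>c>0. fock_modular p (\<lambda>z. of_real c * f z) < \<infinity>)}"

definition Lp_var_norm :: "(complex \<Rightarrow> real) \<Rightarrow> (complex \<Rightarrow> complex) \<Rightarrow> real" where
  "Lp_var_norm p f = Inf {c::real. 0 < c \<and> fock_modular p (\<lambda>z. f z / of_real c) \<le> 1}"

definition Fock_var :: "(complex \<Rightarrow> real) \<Rightarrow> (complex \<Rightarrow> complex) set" where
  "Fock_var p = {f. f holomorphic_on UNIV \<and> f \<in> Lp_var p}"

end

theory Submission
  imports Defs "HOL-Complex_Analysis.Complex_Analysis"
begin


lemma contour_integral_linepath_same_Im':
  assumes "a < b"
  shows   "contour_integral (linepath (Complex a c) (Complex b c)) f =
           integral {a..b} (\<lambda>x. f (Complex x c))"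
proof -
  define z z' where "z = Complex a c" and "z' = Complex b c"
  have "contour_integral (linepath z z') f =
         (z' - z) * integral {0..1} (\<lambda>x. f (linepath z z' x))"
    by (simp add: contour_integral_integral)
  also have "z' - z = of_real (b - a)"
    by (simp add: z_def z'_def Complex_eq algebra_simps)
  also have "integral {0..1} (\<lambda>x. f (linepath z z' x)) =
             integral {0..1} (\<lambda>x. f (Complex (linepath a b x) c))"
    by (simp add: linepath_def Complex_eq scaleR_conv_of_real algebra_simps z_def z'_def)
  also have "\<dots> = integral {0..(b - a) / (b - a)} (\<lambda>x. f (Complex (a + (b - a) * x) c))"
    using \<open>a < b\<close> by (simp add: algebra_simps linepath_def)
  also have "{0..(b - a) / (b - a)} = (\<lambda>x. x / (b - a)) ` {0..b - a}"
    using \<open>a < b\<close> by simp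
  also have "integral \<dots> (\<lambda>x. f (Complex (a + (b - a) * x) c)) =
             integral {a-a..b-a} (\<lambda>x. f (Complex (x + a) c)) / of_real (b - a)"
    using \<open>a < b\<close> by (subst integral_stretch_real) (auto simp: scaleR_conv_of_real add_ac)
  also have "\<dots> = integral {a..b} (\<lambda>x. f (Complex x c)) / of_real (b - a)"
    by (subst integral_shift_real_ivl) (rule refl)
  finally show ?thesis
    using \<open>a < b\<close> by (simp add: z_def z'_def)
qed

lemma bound_horiz:
  assumes "a < b" "\<And>x. x \<in> {a..b} \<Longrightarrow> isCont f (Complex x c)"
  shows "norm (contour_integral (linepath (Complex a c) (Complex b c)) f) \<le>
           integral {a..b} (\<lambda>x. norm (f (Complex x c)))"
proof -
  have cont: "continuous_on {a..b} (\<lambda>x. f (Complex x c))"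
    proof (intro continuous_at_imp_continuous_on ballI)
    fix x assume "x \<in> {a..b}"
    show "isCont (\<lambda>x. f (Complex x c)) x"
      by (rule isCont_o2[where f="\<lambda>x. Complex x c", OF _ assms(2)[OF \<open>x \<in> {a..b}\<close>]]) (auto simp: Complex_eq intro!: continuous_intros)
  qed
  show ?thesis
    unfolding contour_integral_linepath_same_Im'[OF assms(1)]
    by (rule integral_norm_bound_integral)
       (auto intro!: integrable_continuous_interval continuous_intros cont)
qed

lemma bound_vert:
  assumes "a < b" "\<And>x. x \<in> {a..b} \<Longrightarrow> isCont f (Complex c x)"
  shows "norm (contour_integral (linepath (Complex c a) (Complex c b)) f) \<le>
           integral {a..b} (\<lambda>x. norm (f (Complex c x)))"
proof -
  have cont: "continuous_on {a..b} (\<lambda>x. f (Complex c x))"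
    proof (intro continuous_at_imp_continuous_on ballI)
    fix x assume "x \<in> {a..b}"
    show "isCont (\<lambda>x. f (Complex c x)) x"
      by (rule isCont_o2[where f="\<lambda>x. Complex c x", OF _ assms(2)[OF \<open>x \<in> {a..b}\<close>]]) (auto simp: Complex_eq intro!: continuous_intros)
  qed
  have "norm (contour_integral (linepath (Complex c a) (Complex c b)) f) = norm (integral {a..b} (\<lambda>x. f (Complex c x)))"
    by (subst contour_integral_linepath_same_Re[of "Complex c a" c "Complex c b" a b]) (auto simp: norm_mult assms)
  also have "\<dots> \<le> integral {a..b} (\<lambda>x. norm (f (Complex c x)))"
    by (rule integral_norm_bound_integral)
       (auto intro!: integrable_continuous_interval continuous_intros cont)
  finally show ?thesis .
qed

lemma cauchy_square:
  fixes F :: "complex \<Rightarrow> complex"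
  assumes hol: "F holomorphic_on UNIV" and s: "s > 0"
  shows "2*pi*cmod (F z) \<le>
    (integral {Re z - s..Re z + s} (\<lambda>x. cmod (F (Complex x (Im z - s))))
   + integral {Re z - s..Re z + s} (\<lambda>x. cmod (F (Complex x (Im z + s))))
   + integral {Im z - s..Im z + s} (\<lambda>y. cmod (F (Complex (Re z - s) y)))
   + integral {Im z - s..Im z + s} (\<lambda>y. cmod (F (Complex (Re z + s) y)))) / s"
proof -
  define x0 y0 where "x0 = Re z" and "y0 = Im z"
  define a1 a2 a3 a4 where "a1 = Complex (x0 - s) (y0 - s)" and "a2 = Complex (x0 + s) (y0 - s)"
    and "a3 = Complex (x0 + s) (y0 + s)" and "a4 = Complex (x0 - s) (y0 + s)"
  define g where "g w = F w / (w - z)" for w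
  have contF: "isCont F w" for w
    using hol by (meson UNIV_I holomorphic_on_imp_continuous_on continuous_on_eq_continuous_at open_UNIV)
  have contg: "isCont g w" if "w \<noteq> z" for w
    unfolding g_def using that contF by (auto intro!: continuous_intros)
  have zbox: "z \<in> box a1 a3"
    using s by (auto simp: in_box_complex_iff a1_def a3_def x0_def y0_def)
  have le13: "Re a1 \<le> Re a3" "Im a1 \<le> Im a3" using s by (auto simp: a1_def a3_def)
  have znot: "z \<notin> path_image (rectpath a1 a3)"
    using zbox le13 by (simp add: path_image_rectpath_cbox_minus_box)
  have "(g has_contour_integral (2*pi * \<i> * winding_number (rectpath a1 a3) z * F z)) (rectpath a1 a3)"
    unfolding g_def
    by (rule Cauchy_integral_formula_convex_simple[where S=UNIV]) (use hol znot in auto)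
  then have ci: "contour_integral (rectpath a1 a3) g = 2*pi*\<i>*F z"
    using winding_number_rectpath[OF zbox] contour_integral_unique by force
  have a2eq: "a2 = Complex (Re a3) (Im a1)" and a4eq: "a4 = Complex (Re a1) (Im a3)"
    by (simp_all add: a1_def a2_def a3_def a4_def)
  have rp: "rectpath a1 a3 = linepath a1 a2 +++ linepath a2 a3 +++ linepath a3 a4 +++ linepath a4 a1"
    by (simp add: rectpath_def Let_def a2eq a4eq)
  have pim: "path_image (rectpath a1 a3) = closed_segment a1 a2 \<union> closed_segment a2 a3 \<union> closed_segment a3 a4 \<union> closed_segment a4 a1"
    unfolding rp by (simp add: path_image_join Un_assoc)
  have ci_seg: "g contour_integrable_on linepath a b" if "closed_segment a b \<subseteq> path_image (rectpath a1 a3)" for a b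
  proof (rule contour_integrable_continuous_linepath, rule continuous_at_imp_continuous_on, rule ballI)
    fix w assume "w \<in> closed_segment a b"
    then have "w \<noteq> z" using that znot by blast
    then show "isCont g w" by (rule contg)
  qed
  have i1: "g contour_integrable_on linepath a1 a2" and i2: "g contour_integrable_on linepath a2 a3"
   and i3: "g contour_integrable_on linepath a3 a4" and i4: "g contour_integrable_on linepath a4 a1"
    by (rule ci_seg; unfold pim; blast)+
  have sum: "contour_integral (rectpath a1 a3) g = contour_integral (linepath a1 a2) g + contour_integral (linepath a2 a3) g
       + contour_integral (linepath a3 a4) g + contour_integral (linepath a4 a1) g"
    unfolding rp using i1 i2 i3 i4
    by (simp add: contour_integrable_joinI add.assoc)
  have r3: "contour_integral (linepath a3 a4) g = - contour_integral (linepath a4 a3) g"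
    by (metis contour_integral_reversepath reversepath_linepath valid_path_linepath)
  have r4: "contour_integral (linepath a4 a1) g = - contour_integral (linepath a1 a4) g"
    by (metis contour_integral_reversepath reversepath_linepath valid_path_linepath)
  have gle: "cmod (g w) \<le> cmod (F w) / s" if "s \<le> cmod (w - z)" for w
    unfolding g_def norm_divide by (rule frac_le) (use that s in auto)
  have cF: "continuous_on UNIV (\<lambda>w. cmod (F w))"
    using contF by (auto intro!: continuous_at_imp_continuous_on continuous_intros)
  have cg: "continuous_on (UNIV - {z}) (\<lambda>w. cmod (g w))"
    using contg by (auto intro!: continuous_at_imp_continuous_on continuous_intros)
  have intc: "(\<lambda>x. cmod (F (h x))) integrable_on {a..b}" if "continuous_on UNIV h" for h :: "real \<Rightarrow> complex" and a b
    by (rule integrable_continuous_interval, rule continuous_on_compose2[OF cF continuous_on_subset[OF that]]) auto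
  have intg: "(\<lambda>x. cmod (g (h x))) integrable_on {a..b}" if "continuous_on {a..b} h" "\<And>x. x\<in>{a..b} \<Longrightarrow> h x \<noteq> z" for h :: "real \<Rightarrow> complex" and a b
    using that(2) by (intro integrable_continuous_interval continuous_on_compose2[OF cg that(1)]) blast
  have b1: "cmod (contour_integral (linepath a1 a2) g) \<le> integral {Re z - s..Re z + s} (\<lambda>x. cmod (F (Complex x (Im z - s)))) / s"
  proof -
    have "cmod (contour_integral (linepath a1 a2) g) \<le> integral {x0-s..x0+s} (\<lambda>x. cmod (g (Complex x (y0 - s))))"
      unfolding a1_def a2_def by (rule bound_horiz) (use s contg in \<open>auto simp: complex_eq_iff y0_def\<close>)
    also have "\<dots> \<le> integral {x0-s..x0+s} (\<lambda>x. cmod (F (Complex x (y0 - s))) / s)"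
    proof (rule integral_le)
      show "(\<lambda>x. cmod (g (Complex x (y0 - s)))) integrable_on {x0 - s..x0 + s}"
        by (rule intg) (use s in \<open>auto simp: complex_eq_iff y0_def Complex_eq intro!: continuous_intros\<close>)
      show "(\<lambda>x. cmod (F (Complex x (y0 - s))) / s) integrable_on {x0 - s..x0 + s}"
        by (rule integrable_on_divide[OF intc]) (auto simp: Complex_eq intro!: continuous_intros)
      show "cmod (g (Complex x (y0 - s))) \<le> cmod (F (Complex x (y0 - s))) / s" for x
        by (rule gle) (use abs_Im_le_cmod[of "Complex x (y0 - s) - z"] s in \<open>auto simp: y0_def\<close>)
    qed
    finally show ?thesis by (simp add: x0_def y0_def)
  qed
  have b2: "cmod (contour_integral (linepath a2 a3) g) \<le> integral {Im z - s..Im z + s} (\<lambda>y. cmod (F (Complex (Re z + s) y))) / s"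
  proof -
    have "cmod (contour_integral (linepath a2 a3) g) \<le> integral {y0-s..y0+s} (\<lambda>y. cmod (g (Complex (x0 + s) y)))"
      unfolding a2_def a3_def by (rule bound_vert) (use s contg in \<open>auto simp: complex_eq_iff x0_def\<close>)
    also have "\<dots> \<le> integral {y0-s..y0+s} (\<lambda>y. cmod (F (Complex (x0 + s) y)) / s)"
    proof (rule integral_le)
      show "(\<lambda>y. cmod (g (Complex (x0 + s) y))) integrable_on {y0 - s..y0 + s}"
        by (rule intg) (use s in \<open>auto simp: complex_eq_iff x0_def Complex_eq intro!: continuous_intros\<close>)
      show "(\<lambda>y. cmod (F (Complex (x0 + s) y)) / s) integrable_on {y0 - s..y0 + s}"
        by (rule integrable_on_divide[OF intc]) (auto simp: Complex_eq intro!: continuous_intros)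
      show "cmod (g (Complex (x0 + s) y)) \<le> cmod (F (Complex (x0 + s) y)) / s" for y
        by (rule gle) (use abs_Re_le_cmod[of "Complex (x0 + s) y - z"] s in \<open>auto simp: x0_def\<close>)
    qed
    finally show ?thesis by (simp add: x0_def y0_def)
  qed
  have b3: "cmod (contour_integral (linepath a4 a3) g) \<le> integral {Re z - s..Re z + s} (\<lambda>x. cmod (F (Complex x (Im z + s)))) / s"
  proof -
    have "cmod (contour_integral (linepath a4 a3) g) \<le> integral {x0-s..x0+s} (\<lambda>x. cmod (g (Complex x (y0 + s))))"
      unfolding a4_def a3_def by (rule bound_horiz) (use s contg in \<open>auto simp: complex_eq_iff y0_def\<close>)
    also have "\<dots> \<le> integral {x0-s..x0+s} (\<lambda>x. cmod (F (Complex x (y0 + s))) / s)"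
    proof (rule integral_le)
      show "(\<lambda>x. cmod (g (Complex x (y0 + s)))) integrable_on {x0 - s..x0 + s}"
        by (rule intg) (use s in \<open>auto simp: complex_eq_iff y0_def Complex_eq intro!: continuous_intros\<close>)
      show "(\<lambda>x. cmod (F (Complex x (y0 + s))) / s) integrable_on {x0 - s..x0 + s}"
        by (rule integrable_on_divide[OF intc]) (auto simp: Complex_eq intro!: continuous_intros)
      show "cmod (g (Complex x (y0 + s))) \<le> cmod (F (Complex x (y0 + s))) / s" for x
        by (rule gle) (use abs_Im_le_cmod[of "Complex x (y0 + s) - z"] s in \<open>auto simp: y0_def\<close>)
    qed
    finally show ?thesis by (simp add: x0_def y0_def)
  qed
  have b4: "cmod (contour_integral (linepath a1 a4) g) \<le> integral {Im z - s..Im z + s} (\<lambda>y. cmod (F (Complex (Re z - s) y))) / s"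
  proof -
    have "cmod (contour_integral (linepath a1 a4) g) \<le> integral {y0-s..y0+s} (\<lambda>y. cmod (g (Complex (x0 - s) y)))"
      unfolding a1_def a4_def by (rule bound_vert) (use s contg in \<open>auto simp: complex_eq_iff x0_def\<close>)
    also have "\<dots> \<le> integral {y0-s..y0+s} (\<lambda>y. cmod (F (Complex (x0 - s) y)) / s)"
    proof (rule integral_le)
      show "(\<lambda>y. cmod (g (Complex (x0 - s) y))) integrable_on {y0 - s..y0 + s}"
        by (rule intg) (use s in \<open>auto simp: complex_eq_iff x0_def Complex_eq intro!: continuous_intros\<close>)
      show "(\<lambda>y. cmod (F (Complex (x0 - s) y)) / s) integrable_on {y0 - s..y0 + s}"
        by (rule integrable_on_divide[OF intc]) (auto simp: Complex_eq intro!: continuous_intros)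
      show "cmod (g (Complex (x0 - s) y)) \<le> cmod (F (Complex (x0 - s) y)) / s" for y
        by (rule gle) (use abs_Re_le_cmod[of "Complex (x0 - s) y - z"] s in \<open>auto simp: x0_def\<close>)
    qed
    finally show ?thesis by (simp add: x0_def y0_def)
  qed
  have "2*pi*cmod (F z) = cmod (contour_integral (rectpath a1 a3) g)"
    by (simp add: ci norm_mult)
  also have "\<dots> \<le> cmod (contour_integral (linepath a1 a2) g) + cmod (contour_integral (linepath a2 a3) g)
      + cmod (contour_integral (linepath a4 a3) g) + cmod (contour_integral (linepath a1 a4) g)"
    unfolding sum r3 r4
    by (smt (verit) norm_triangle_ineq norm_minus_cancel)
  also have "\<dots> \<le> integral {Re z - s..Re z + s} (\<lambda>x. cmod (F (Complex x (Im z - s)))) / s + integral {Im z - s..Im z + s} (\<lambda>y. cmod (F (Complex (Re z + s) y))) / s + integral {Re z - s..Re z + s} (\<lambda>x. cmod (F (Complex x (Im z + s)))) / s + integral {Im z - s..Im z + s} (\<lambda>y. cmod (F (Complex (Re z - s) y))) / s" using b1 b2 b3 b4 by linarith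
  finally show ?thesis by (simp add: add_divide_distrib add_ac)
qed



lemma Complex_meas[measurable]: "(\<lambda>p::real\<times>real. Complex (fst p) (snd p)) \<in> borel_measurable borel"
  by (intro borel_measurable_continuous_onI) (simp add: Complex_eq continuous_intros)

lemma lborel_complex: "distr (lborel :: (real\<times>real) measure) borel (\<lambda>p. Complex (fst p) (snd p)) = lborel"
proof (rule lborel_eqI[symmetric])
  fix l u :: complex assume le: "\<And>b. b \<in> Basis \<Longrightarrow> l \<bullet> b \<le> u \<bullet> b"
  then have le1: "Re l \<le> Re u" "Im l \<le> Im u" using le[of 1] le[of \<i>] by (auto simp: Basis_complex_def inner_complex_def)
  have pre: "(\<lambda>p::real\<times>real. Complex (fst p) (snd p)) -` box l u = box (Re l, Im l) (Re u, Im u)"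
    by (auto simp: box_def Basis_complex_def Basis_prod_def inner_prod_def)
  have "emeasure (distr (lborel :: (real\<times>real) measure) borel (\<lambda>p. Complex (fst p) (snd p))) (box l u)
      = emeasure lborel (box (Re l, Im l) (Re u, Im u))"
    by (subst emeasure_distr) (auto simp: pre)
  also have "\<dots> = ennreal ((Re u - Re l) * (Im u - Im l))"
    using le1 by (subst emeasure_lborel_box) (auto simp: Basis_prod_def inner_prod_def)
  also have "\<dots> = (\<Prod>b\<in>Basis. (u - l) \<bullet> b)"
    by (simp add: Basis_complex_def)
  finally show "emeasure (distr (lborel :: (real\<times>real) measure) borel (\<lambda>p. Complex (fst p) (snd p))) (box l u) = (\<Prod>b\<in>Basis. (u - l) \<bullet> b)" .
qed simp

lemma nn_integral_complex_pair:
  fixes f :: "complex \<Rightarrow> ennreal"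
  assumes [measurable]: "f \<in> borel_measurable borel"
  shows "(\<integral>\<^sup>+z. f z \<partial>lborel) = (\<integral>\<^sup>+p. f (Complex (fst p) (snd p)) \<partial>(lborel \<Otimes>\<^sub>M lborel))"
proof -
  have "(\<integral>\<^sup>+z. f z \<partial>lborel) = (\<integral>\<^sup>+z. f z \<partial>(distr (lborel :: (real\<times>real) measure) borel (\<lambda>p. Complex (fst p) (snd p))))"
    by (simp add: lborel_complex)
  also have "\<dots> = (\<integral>\<^sup>+p. f (Complex (fst p) (snd p)) \<partial>(lborel :: (real\<times>real) measure))"
    by (subst nn_integral_distr) auto
  finally show ?thesis by (simp add: lborel_prod)
qed

lemma meas_pair_complex:
  fixes f :: "complex \<Rightarrow> ennreal"
  assumes "f \<in> borel_measurable borel"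
  shows "(\<lambda>p. f (Complex (fst p) (snd p))) \<in> borel_measurable (lborel \<Otimes>\<^sub>M lborel)"
  unfolding lborel_prod measurable_lborel2 by (rule measurable_compose[OF Complex_meas assms])

lemma nn_integral_complex_yx:
  fixes f :: "complex \<Rightarrow> ennreal"
  assumes "f \<in> borel_measurable borel"
  shows "(\<integral>\<^sup>+z. f z \<partial>lborel) = (\<integral>\<^sup>+y. (\<integral>\<^sup>+x. f (Complex x y) \<partial>lborel) \<partial>lborel)"
  unfolding nn_integral_complex_pair[OF assms]
  using lborel_pair.nn_integral_snd[OF meas_pair_complex[OF assms]] by simp

lemma nn_integral_complex_xy:
  fixes f :: "complex \<Rightarrow> ennreal"
  assumes "f \<in> borel_measurable borel"
  shows "(\<integral>\<^sup>+z. f z \<partial>lborel) = (\<integral>\<^sup>+x. (\<integral>\<^sup>+y. f (Complex x y) \<partial>lborel) \<partial>lborel)"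
  unfolding nn_integral_complex_pair[OF assms]
  using lborel.nn_integral_fst[OF meas_pair_complex[OF assms]] by simp

lemma Complex_meas2[measurable]:
  assumes [measurable]: "f \<in> borel_measurable M" "g \<in> borel_measurable M"
  shows "(\<lambda>x. Complex (f x) (g x)) \<in> borel_measurable M"
proof -
  have "(\<lambda>x. Complex (f x) (g x)) = (\<lambda>x. of_real (f x) + \<i> * of_real (g x))"
    by (simp add: Complex_eq)
  also have "\<dots> \<in> borel_measurable M" by measurable
  finally show ?thesis .
qed

lemma point_bound:
  fixes F :: "complex \<Rightarrow> complex"
  assumes hol: "F holomorphic_on UNIV"
  shows "ennreal (pi * cmod (F z)) \<le>
     8 * (\<integral>\<^sup>+w. ennreal (indicator (cbox (z - Complex 1 1) (z + Complex 1 1)) w * cmod (F w)) \<partial>lborel)"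
proof -
  define x0 y0 where "x0 = Re z" and "y0 = Im z"
  have contF: "isCont F w" for w
    using hol by (meson UNIV_I holomorphic_on_imp_continuous_on continuous_on_eq_continuous_at open_UNIV)
  have cF: "continuous_on UNIV F"
    using contF by (simp add: continuous_at_imp_continuous_on)
  have Fmeas[measurable]: "F \<in> borel_measurable borel"
    using cF by (rule borel_measurable_continuous_onI)
  define g where "g x y = cmod (F (Complex x y))" for x y
  have gnn: "0 \<le> g x y" for x y by (simp add: g_def)
  have cg1: "continuous_on A (\<lambda>x. g x y)" for y A
    unfolding g_def by (intro continuous_on_norm continuous_on_compose2[OF cF]) (auto simp: Complex_eq intro!: continuous_intros)
  have cg2: "continuous_on A (\<lambda>y. g x y)" for x A
    unfolding g_def by (intro continuous_on_norm continuous_on_compose2[OF cF]) (auto simp: Complex_eq intro!: continuous_intros)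
  have int1: "(\<lambda>x. g x y) integrable_on {a..b}" for a b y
    by (rule integrable_continuous_interval, rule cg1)
  have int2: "(\<lambda>y. g x y) integrable_on {a..b}" for a b x
    by (rule integrable_continuous_interval, rule cg2)
  define hH where "hH y = integral {x0-1..x0+1} (\<lambda>x. g x y)" for y
  define vV where "vV x = integral {y0-1..y0+1} (\<lambda>y. g x y)" for x
  have step1: "pi * cmod (F z) \<le> hH (y0-s) + hH (y0+s) + vV (x0-s) + vV (x0+s)" if s: "s \<in> {1/2..1}" for s
  proof -
    define A where "A = integral {x0 - s..x0 + s} (\<lambda>x. g x (y0 - s))"
    define B where "B = integral {x0 - s..x0 + s} (\<lambda>x. g x (y0 + s))"
    define C where "C = integral {y0 - s..y0 + s} (\<lambda>y. g (x0 - s) y)"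
    define D where "D = integral {y0 - s..y0 + s} (\<lambda>y. g (x0 + s) y)"
    have cs: "2*pi*cmod (F z) \<le> (A + B + C + D) / s"
      using cauchy_square[OF hol, of s z] s unfolding A_def B_def C_def D_def g_def x0_def y0_def by simp
    have A: "A \<le> hH (y0 - s)" unfolding A_def hH_def
      by (rule integral_subset_le) (use s in \<open>auto intro: int1 gnn\<close>)
    have B: "B \<le> hH (y0 + s)" unfolding B_def hH_def
      by (rule integral_subset_le) (use s in \<open>auto intro: int1 gnn\<close>)
    have C: "C \<le> vV (x0 - s)" unfolding C_def vV_def
      by (rule integral_subset_le) (use s in \<open>auto intro: int2 gnn\<close>)
    have D: "D \<le> vV (x0 + s)" unfolding D_def vV_def
      by (rule integral_subset_le) (use s in \<open>auto intro: int2 gnn\<close>)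
    have nn: "0 \<le> A + B + C + D" unfolding A_def B_def C_def D_def
      by (intro add_nonneg_nonneg integral_nonneg int1 int2 gnn)
    have "(A + B + C + D) / s \<le> 2 * (A + B + C + D)"
    proof -
      have "(A + B + C + D) * 1 \<le> (A + B + C + D) * (2 * s)"
        by (rule mult_left_mono) (use s nn in auto)
      then show ?thesis using s by (simp add: divide_le_eq algebra_simps)
    qed
    moreover have "2 * (pi * cmod (F z)) \<le> (A + B + C + D) / s" using cs by (simp add: mult.assoc)
    ultimately show ?thesis using A B C D by (smt (verit))
  qed
  have gmeas[measurable]: "(\<lambda>p. g (fst p) (snd p)) \<in> borel_measurable borel"
    unfolding g_def by measurable
  have gmeas1[measurable]: "(\<lambda>x. g x y) \<in> borel_measurable borel" for y
    unfolding g_def by measurable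
  have gmeas2[measurable]: "(\<lambda>y. g x y) \<in> borel_measurable borel" for x
    unfolding g_def by measurable
  define Ix where "Ix = {x0-1..x0+1}"
  define Iy where "Iy = {y0-1..y0+1}"
  have [measurable]: "Ix \<in> sets borel" "Iy \<in> sets borel" by (auto simp: Ix_def Iy_def)
  have gmeas1'[measurable]: "(\<lambda>x. g x y) \<in> borel_measurable lborel" for y
    unfolding g_def by measurable
  have gmeas2'[measurable]: "(\<lambda>y. g x y) \<in> borel_measurable lborel" for x
    unfolding g_def by measurable
  define nH where "nH y = (\<integral>\<^sup>+x. ennreal (indicator Ix x * g x y) \<partial>lborel)" for y
  define nV where "nV x = (\<integral>\<^sup>+y. ennreal (indicator Iy y * g x y) \<partial>lborel)" for x
  have nH: "nH y = ennreal (hH y)" for y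
    unfolding nH_def hH_def Ix_def
    by (rule nn_integral_has_integral_lebesgue) (auto intro: gnn int1)
  have nV: "nV x = ennreal (vV x)" for x
    unfolding nV_def vV_def Iy_def
    by (rule nn_integral_has_integral_lebesgue) (auto intro: gnn int2)
  have nHmeas[measurable]: "nH \<in> borel_measurable borel"
    unfolding nH_def g_def Ix_def by measurable
  have nVmeas[measurable]: "nV \<in> borel_measurable borel"
    unfolding nV_def g_def Iy_def by measurable
  define S where "S = (\<integral>\<^sup>+w. ennreal (indicator (cbox (z - Complex 1 1) (z + Complex 1 1)) w * cmod (F w)) \<partial>lborel)"
  have ind: "indicator (cbox (z - Complex 1 1) (z + Complex 1 1)) (Complex x y) = (indicator Ix x * indicator Iy y :: real)" for x y
    by (auto simp: indicator_def in_cbox_complex_iff Ix_def Iy_def x0_def y0_def)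
  have Sy: "S = (\<integral>\<^sup>+y. ennreal (indicator Iy y) * nH y \<partial>lborel)"
  proof -
    have "S = (\<integral>\<^sup>+y. (\<integral>\<^sup>+x. ennreal (indicator (cbox (z - Complex 1 1) (z + Complex 1 1)) (Complex x y) * cmod (F (Complex x y))) \<partial>lborel) \<partial>lborel)"
      unfolding S_def by (rule nn_integral_complex_yx) measurable
    also have "\<dots> = (\<integral>\<^sup>+y. (\<integral>\<^sup>+x. ennreal (indicator Iy y) * ennreal (indicator Ix x * g x y) \<partial>lborel) \<partial>lborel)"
      by (intro nn_integral_cong) (simp add: ind g_def ennreal_mult' mult_ac)
    also have "\<dots> = (\<integral>\<^sup>+y. ennreal (indicator Iy y) * nH y \<partial>lborel)"
      unfolding nH_def by (intro nn_integral_cong nn_integral_cmult) measurable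
    finally show ?thesis .
  qed
  have Sx: "S = (\<integral>\<^sup>+x. ennreal (indicator Ix x) * nV x \<partial>lborel)"
  proof -
    have "S = (\<integral>\<^sup>+x. (\<integral>\<^sup>+y. ennreal (indicator (cbox (z - Complex 1 1) (z + Complex 1 1)) (Complex x y) * cmod (F (Complex x y))) \<partial>lborel) \<partial>lborel)"
      unfolding S_def by (rule nn_integral_complex_xy) measurable
    also have "\<dots> = (\<integral>\<^sup>+x. (\<integral>\<^sup>+y. ennreal (indicator Ix x) * ennreal (indicator Iy y * g x y) \<partial>lborel) \<partial>lborel)"
      by (intro nn_integral_cong) (simp add: ind g_def ennreal_mult' mult_ac)
    also have "\<dots> = (\<integral>\<^sup>+x. ennreal (indicator Ix x) * nV x \<partial>lborel)"
      unfolding nV_def by (intro nn_integral_cong nn_integral_cmult) measurable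
    finally show ?thesis .
  qed
  define J where "J = {1/2..1::real}"
  have shift: "(\<integral>\<^sup>+s. ennreal (indicator J s) * N (t + c * s) \<partial>lborel) \<le> (\<integral>\<^sup>+u. ennreal (indicator I u) * N u \<partial>lborel)"
    if [measurable]: "N \<in> borel_measurable borel" and c: "c = 1 \<or> c = -1" and sub: "\<And>s. s \<in> J \<Longrightarrow> t + c * s \<in> I"
      and [measurable]: "I \<in> sets borel"
    for N :: "real \<Rightarrow> ennreal" and t c I
  proof -
    have "(\<integral>\<^sup>+u. ennreal (indicator I u) * N u \<partial>lborel) = \<bar>c\<bar> * (\<integral>\<^sup>+s. ennreal (indicator I (t + c * s)) * N (t + c * s) \<partial>lborel)"
      by (rule nn_integral_real_affine) (use c in auto)
    also have "\<dots> = (\<integral>\<^sup>+s. ennreal (indicator I (t + c * s)) * N (t + c * s) \<partial>lborel)"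
      using c by auto
    also have "(\<integral>\<^sup>+s. ennreal (indicator J s) * N (t + c * s) \<partial>lborel) \<le> \<dots>"
      by (intro nn_integral_mono mult_right_mono) (auto simp: indicator_def dest: sub)
    finally show ?thesis by simp
  qed
  have P1: "(\<integral>\<^sup>+s. ennreal (indicator J s) * nH (y0 + 1 * s) \<partial>lborel) \<le> S"
    unfolding Sy by (rule shift) (auto simp: J_def Iy_def)
  have P2: "(\<integral>\<^sup>+s. ennreal (indicator J s) * nH (y0 + (-1) * s) \<partial>lborel) \<le> S"
    unfolding Sy by (rule shift) (auto simp: J_def Iy_def)
  have P3: "(\<integral>\<^sup>+s. ennreal (indicator J s) * nV (x0 + 1 * s) \<partial>lborel) \<le> S"
    unfolding Sx by (rule shift) (auto simp: J_def Ix_def)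
  have P4: "(\<integral>\<^sup>+s. ennreal (indicator J s) * nV (x0 + (-1) * s) \<partial>lborel) \<le> S"
    unfolding Sx by (rule shift) (auto simp: J_def Ix_def)
  have "ennreal (pi * cmod (F z)) * inverse 2 = (\<integral>\<^sup>+s. ennreal (pi * cmod (F z)) * indicator J s \<partial>lborel)"
    by (subst nn_integral_cmult_indicator) (auto simp: J_def ennreal_divide_numeral)
  also have "\<dots> \<le> (\<integral>\<^sup>+s. ennreal (indicator J s) * nH (y0 + (-1) * s) + ennreal (indicator J s) * nH (y0 + 1 * s)
        + ennreal (indicator J s) * nV (x0 + (-1) * s) + ennreal (indicator J s) * nV (x0 + 1 * s) \<partial>lborel)"
  proof (rule nn_integral_mono)
    fix s
    show "ennreal (pi * cmod (F z)) * indicator J s \<le> ennreal (indicator J s) * nH (y0 + (-1) * s) + ennreal (indicator J s) * nH (y0 + 1 * s)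
        + ennreal (indicator J s) * nV (x0 + (-1) * s) + ennreal (indicator J s) * nV (x0 + 1 * s)"
    proof (cases "s \<in> J")
      case True
      have "ennreal (pi * cmod (F z)) \<le> ennreal (hH (y0-s) + hH (y0+s) + vV (x0-s) + vV (x0+s))"
        using step1[of s] True by (auto simp: J_def intro: ennreal_leI)
      also have "\<dots> = nH (y0-s) + nH (y0+s) + nV (x0-s) + nV (x0+s)"
        unfolding nH nV
        by (simp add: ennreal_plus[symmetric] hH_def vV_def integral_nonneg int1 int2 gnn del: ennreal_plus)
      finally show ?thesis using True by simp
    qed simp
  qed
  also have "\<dots> = (\<integral>\<^sup>+s. ennreal (indicator J s) * nH (y0 + (-1) * s) \<partial>lborel) + (\<integral>\<^sup>+s. ennreal (indicator J s) * nH (y0 + 1 * s) \<partial>lborel)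
        + (\<integral>\<^sup>+s. ennreal (indicator J s) * nV (x0 + (-1) * s) \<partial>lborel) + (\<integral>\<^sup>+s. ennreal (indicator J s) * nV (x0 + 1 * s) \<partial>lborel)"
    by (subst nn_integral_add, (auto simp: J_def)[2])+ (auto simp: J_def)
  also have "\<dots> \<le> S + S + S + S"
    by (intro add_mono P1 P2 P3 P4)
  also have "S + S + S + S = (1 + 1 + 1 + 1) * S" by (simp only: distrib_right mult_1)
  also have "(1 + 1 + 1 + 1 :: ennreal) = 4" by simp
  finally have le4: "ennreal (pi * cmod (F z)) * inverse 2 \<le> 4 * S" .
  have "ennreal (pi * cmod (F z)) = (ennreal (pi * cmod (F z)) * inverse 2) * 2"
  proof -
    have "inverse 2 * (2::ennreal) = 1" using ennreal_divide_self[of 2] by (simp add: divide_ennreal_def mult.commute)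
    then show ?thesis by (simp add: mult.assoc)
  qed
  also have "\<dots> \<le> (4 * S) * 2" by (rule mult_right_mono[OF le4]) simp
  finally show ?thesis by (simp add: S_def mult_ac)
qed


lemma le_one_plus_powr:
  fixes x q :: real
  assumes "0 \<le> x" "1 \<le> q"
  shows "x \<le> 1 + x powr q"
proof (cases "x \<le> 1")
  case True then show ?thesis by (smt (verit) powr_ge_zero)
next
  case False
  then have "x powr 1 \<le> x powr q" using assms by (intro powr_mono) auto
  then show ?thesis using False assms by (smt (verit) powr_one_gt_zero_iff)
qed

lemma cmod_diff_sq:
  fixes w z :: complex
  shows "(cmod (w - z))\<^sup>2 = (cmod w)\<^sup>2 - 2 * Re (cnj z * w) + (cmod z)\<^sup>2"
  unfolding cmod_power2 by (simp add: power2_eq_square algebra_simps)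

lemma G_bound:
  fixes h :: "complex \<Rightarrow> complex" and p :: "complex \<Rightarrow> real"
  assumes hol: "h holomorphic_on UNIV" and p1: "\<And>z. 1 \<le> p z"
    and pmeas[measurable]: "p \<in> borel_measurable borel"
    and modle: "fock_modular p h \<le> 1"
  shows "cmod (h z) * exp (- (cmod z)\<^sup>2) \<le> 40 * exp 2 / pi"
proof -
  define F where "F w = h w * exp (complex_of_real ((cmod z)\<^sup>2) - 2 * cnj z * w)" for w
  have holF: "F holomorphic_on UNIV"
    unfolding F_def by (intro holomorphic_intros hol)
  define G where "G w = cmod (h w) * exp (- (cmod w)\<^sup>2)" for w
  have Gnn: "0 \<le> G w" for w by (simp add: G_def)
  have absF: "cmod (F w) = G w * exp ((cmod (w - z))\<^sup>2)" for w
  proof -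
    have "cmod (F w) = cmod (h w) * exp ((cmod z)\<^sup>2 - 2 * Re (cnj z * w))"
      by (simp add: F_def norm_mult)
    also have "\<dots> = cmod (h w) * (exp (- (cmod w)\<^sup>2) * exp ((cmod (w - z))\<^sup>2))"
      by (simp add: cmod_diff_sq exp_add[symmetric])
    finally show ?thesis by (simp add: G_def mult_ac)
  qed
  have Fz: "cmod (F z) = G z" by (simp add: absF)
  define Q where "Q = cbox (z - Complex 1 1) (z + Complex 1 1)"
  have inQ: "(cmod (w - z))\<^sup>2 \<le> 2" if "w \<in> Q" for w
  proof -
    have "\<bar>Re (w - z)\<bar> \<le> 1" "\<bar>Im (w - z)\<bar> \<le> 1"
      using that by (auto simp: Q_def in_cbox_complex_iff)
    then have "(Re (w - z))\<^sup>2 \<le> 1" "(Im (w - z))\<^sup>2 \<le> 1"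
      by (simp_all only: abs_square_le_1)
    then show ?thesis by (simp add: cmod_power2)
  qed
  define Gp where "Gp w = cmod (h w) powr p w * exp (- p w * (cmod w)\<^sup>2)" for w
  have GGp: "G w powr p w = Gp w" for w
    by (simp add: G_def Gp_def powr_mult exp_powr_real mult_ac)
  have pw: "indicator Q w * cmod (F w) \<le> exp 2 * (indicator Q w + Gp w)" for w
  proof (cases "w \<in> Q")
    case True
    have "cmod (F w) \<le> G w * exp 2"
      unfolding absF by (intro mult_left_mono) (use inQ[OF True] Gnn in auto)
    also have "\<dots> \<le> (1 + Gp w) * exp 2"
      using le_one_plus_powr[OF Gnn[of w] p1[of w]] GGp by (intro mult_right_mono) auto
    finally show ?thesis using True by (simp add: mult_ac)
  next
    case False then show ?thesis by (simp add: Gp_def)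
  qed
  have contH: "continuous_on UNIV h" using hol holomorphic_on_imp_continuous_on by blast
  have hmeas[measurable]: "h \<in> borel_measurable borel"
    using contH by (rule borel_measurable_continuous_onI)
  have [measurable]: "Q \<in> sets borel" by (simp add: Q_def)
  have Gpmeas[measurable]: "Gp \<in> borel_measurable borel"
    unfolding Gp_def by measurable
  have "ennreal (pi * G z) \<le> 8 * (\<integral>\<^sup>+w. ennreal (indicator Q w * cmod (F w)) \<partial>lborel)"
    using point_bound[OF holF, of z] by (simp add: Fz Q_def)
  also have "(\<integral>\<^sup>+w. ennreal (indicator Q w * cmod (F w)) \<partial>lborel) \<le>
      (\<integral>\<^sup>+w. ennreal (exp 2) * (ennreal (indicator Q w) + ennreal (Gp w)) \<partial>lborel)"
  proof (rule nn_integral_mono)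
    fix w
    have "ennreal (indicator Q w * cmod (F w)) \<le> ennreal (exp 2 * (indicator Q w + Gp w))"
      by (rule ennreal_leI[OF pw])
    also have "\<dots> = ennreal (exp 2) * (ennreal (indicator Q w) + ennreal (Gp w))"
      by (simp add: ennreal_mult ennreal_plus Gp_def)
    finally show "ennreal (indicator Q w * cmod (F w)) \<le> ennreal (exp 2) * (ennreal (indicator Q w) + ennreal (Gp w))" .
  qed
  also have "\<dots> = ennreal (exp 2) * ((\<integral>\<^sup>+w. ennreal (indicator Q w) \<partial>lborel) + (\<integral>\<^sup>+w. ennreal (Gp w) \<partial>lborel))"
    by (subst nn_integral_cmult) (auto simp: nn_integral_add)
  also have "(\<integral>\<^sup>+w. ennreal (indicator Q w) \<partial>lborel) = 4"
  proof -
    have "(\<integral>\<^sup>+w. ennreal (indicator Q w) \<partial>lborel) = emeasure lborel Q"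
      by (simp add: ennreal_indicator)
    also have "\<dots> = 4"
      by (simp add: Q_def emeasure_lborel_cbox_eq Basis_complex_def)
    finally show ?thesis .
  qed
  also have "(\<integral>\<^sup>+w. ennreal (Gp w) \<partial>lborel) = fock_modular p h"
    by (simp add: fock_modular_def Gp_def)
  finally have "ennreal (pi * G z) \<le> 8 * (ennreal (exp 2) * (4 + fock_modular p h))"
    by (simp add: mult_left_mono)
  also have "\<dots> \<le> 8 * (ennreal (exp 2) * (4 + 1))"
    by (intro mult_left_mono add_left_mono modle) auto
  also have "\<dots> = 8 * (ennreal (exp 2) * 5)"
    by simp
  also have "\<dots> = (8 * 5) * ennreal (exp 2)"
    by (simp only: mult_ac)
  also have "\<dots> = ennreal (40 * exp 2)"
    by (simp add: ennreal_mult)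
  finally have "pi * G z \<le> 40 * exp 2"
    by (subst (asm) ennreal_le_iff) auto
  then show ?thesis
    by (simp add: G_def field_simps)
qed


lemma integrand_eq:
  fixes u t r :: real
  shows "u powr r * exp (- r * t) = (u * exp (- t)) powr r"
  by (simp add: powr_mult exp_powr_real mult_ac)

lemma modular_q_le:
  fixes f :: "complex \<Rightarrow> complex" and p q :: "complex \<Rightarrow> real"
  assumes hol: "f holomorphic_on UNIV" and p1: "\<And>z. 1 \<le> p z" and pq: "\<And>z. p z \<le> q z"
    and pmeas: "p \<in> borel_measurable borel"
    and c: "c > 0" and modle: "fock_modular p (\<lambda>z. f z / of_real c) \<le> 1"
    and C: "C \<ge> 1" "C \<ge> 40 * exp 2 / pi"
  shows "fock_modular q (\<lambda>z. f z / of_real (C * c)) \<le> fock_modular p (\<lambda>z. f z / of_real c)"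
proof -
  define h where "h z = f z / of_real c" for z
  have holh: "h holomorphic_on UNIV" unfolding h_def by (intro holomorphic_intros hol) (use c in auto)
  have hb: "cmod (h z) * exp (- (cmod z)\<^sup>2) \<le> C" for z
    using G_bound[OF holh p1 pmeas modle[folded h_def], of z] C by (simp add: h_def)
  show ?thesis
    unfolding fock_modular_def
  proof (rule nn_integral_mono, rule ennreal_leI)
    fix z
    define a where "a = cmod (h z) * exp (- (cmod z)\<^sup>2)"
    have a0: "0 \<le> a" by (simp add: a_def)
    have aC: "a / C \<le> 1" using hb[of z] C by (simp add: a_def)
    have eq1: "cmod (f z / complex_of_real (C * c)) = cmod (h z) / C"
      using c C by (simp add: h_def norm_divide norm_mult)
    have "cmod (f z / complex_of_real (C * c)) powr q z * exp (- q z * (cmod z)\<^sup>2) = (a / C) powr q z"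
      unfolding eq1 integrand_eq a_def by (simp add: field_simps)
    also have "\<dots> \<le> (a / C) powr p z"
      by (rule powr_mono') (use pq a0 aC C in auto)
    also have "\<dots> \<le> a powr p z"
      by (rule powr_mono2) (use p1[of z] a0 C mult_left_mono[of 1 C a] in \<open>auto simp: divide_le_eq\<close>)
    also have "\<dots> = cmod (f z / complex_of_real c) powr p z * exp (- p z * (cmod z)\<^sup>2)"
      unfolding integrand_eq a_def h_def ..
    finally show "cmod (f z / complex_of_real (C * c)) powr q z * exp (- q z * (cmod z)\<^sup>2)
        \<le> cmod (f z / complex_of_real c) powr p z * exp (- p z * (cmod z)\<^sup>2)" .
  qed
qed

lemma Lp_nonempty:
  fixes f :: "complex \<Rightarrow> complex" and p :: "complex \<Rightarrow> real"
  assumes f: "f \<in> Lp_var p" and p1: "\<And>z. 1 \<le> p z" and pmeas[measurable]: "p \<in> borel_measurable borel"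
  shows "\<exists>c>0. fock_modular p (\<lambda>z. f z / of_real c) \<le> 1"
proof -
  obtain c0 where c0: "c0 > 0" and fin: "fock_modular p (\<lambda>z. of_real c0 * f z) < \<infinity>"
    using f by (auto simp: Lp_var_def)
  have fmeas[measurable]: "f \<in> borel_measurable borel" using f by (simp add: Lp_var_def)
  define M where "M = fock_modular p (\<lambda>z. of_real c0 * f z)"
  obtain K where K: "M = ennreal K" "0 \<le> K" using fin unfolding M_def[symmetric]
    by (cases M rule: ennreal_cases) auto
  define t where "t = 1 / (K + 1)"
  have t0: "0 < t" "t \<le> 1" using K by (auto simp: t_def)
  have tK: "t * K \<le> 1" using K by (simp add: t_def)
  define lam where "lam = 1 / (c0 * t)"
  have lam0: "lam > 0" using c0 t0 by (simp add: lam_def)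
  have eqf: "f z / of_real lam = of_real t * (of_real c0 * f z)" for z
    using c0 t0 by (simp add: lam_def field_simps)
  have "fock_modular p (\<lambda>z. f z / of_real lam) \<le> (\<integral>\<^sup>+z. ennreal t * ennreal (cmod (of_real c0 * f z) powr p z * exp (- p z * (cmod z)\<^sup>2)) \<partial>lborel)"
    unfolding fock_modular_def eqf
  proof (rule nn_integral_mono)
    fix z
    define X where "X = cmod (of_real c0 * f z)"
    have "cmod (complex_of_real t * (complex_of_real c0 * f z)) powr p z = t powr p z * X powr p z"
      using t0 by (simp add: X_def norm_mult powr_mult)
    also have "\<dots> \<le> t * X powr p z"
      using powr_mono'[of 1 "p z" t] p1[of z] t0 by (intro mult_right_mono) auto
    finally have "cmod (complex_of_real t * (complex_of_real c0 * f z)) powr p z * exp (- p z * (cmod z)\<^sup>2)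
        \<le> t * (X powr p z * exp (- p z * (cmod z)\<^sup>2))"
      by (simp add: mult_right_mono mult.assoc)
    then show "ennreal (cmod (complex_of_real t * (complex_of_real c0 * f z)) powr p z * exp (- p z * (cmod z)\<^sup>2))
        \<le> ennreal t * ennreal (cmod (of_real c0 * f z) powr p z * exp (- p z * (cmod z)\<^sup>2))"
      using t0 by (simp add: X_def ennreal_mult'[symmetric] ennreal_leI)
  qed
  also have "\<dots> = ennreal t * M"
    unfolding M_def fock_modular_def by (rule nn_integral_cmult) measurable
  also have "\<dots> = ennreal (t * K)" using K t0 by (simp add: ennreal_mult)
  also have "\<dots> \<le> 1" using tK by simp
  finally show ?thesis using lam0 by blast
qed


theorem mainTheorem6:
  fixes p q :: "complex \<Rightarrow> real"
  assumes "var_exponent_bdd p" and "var_exponent_bdd q"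
    and "\<And>z. p z \<le> q z"
  shows "Fock_var p \<subseteq> Fock_var q \<and>
    (\<exists>M>0. \<forall>f\<in>Fock_var p. Lp_var_norm q f \<le> M * Lp_var_norm p f)"
proof -
  have p1: "\<And>z. 1 \<le> p z" and pmeas: "p \<in> borel_measurable borel"
    using assms(1) by (auto simp: var_exponent_bdd_def var_exponent_def)
  define C where "C = max 1 (40 * exp 2 / pi)"
  have C: "C \<ge> 1" "C \<ge> 40 * exp 2 / pi" "C > 0" by (auto simp: C_def)
  define Sp where "Sp f = {c::real. 0 < c \<and> fock_modular p (\<lambda>z. f z / of_real c) \<le> 1}" for f
  define Sq where "Sq f = {c::real. 0 < c \<and> fock_modular q (\<lambda>z. f z / of_real c) \<le> 1}" for f
  have trans: "C * c \<in> Sq f" if "f \<in> Fock_var p" "c \<in> Sp f" for f c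
  proof -
    have hol: "f holomorphic_on UNIV" using that(1) by (simp add: Fock_var_def)
    have c: "c > 0" "fock_modular p (\<lambda>z. f z / of_real c) \<le> 1" using that(2) by (auto simp: Sp_def)
    have "fock_modular q (\<lambda>z. f z / of_real (C * c)) \<le> 1"
      using modular_q_le[OF hol p1 assms(3) pmeas c C(1,2)] c(2) by simp
    then show ?thesis using C c by (simp add: Sq_def)
  qed
  have ne: "Sp f \<noteq> {}" if "f \<in> Fock_var p" for f
    using Lp_nonempty[OF _ p1 pmeas, of f] that by (auto simp: Fock_var_def Sp_def)
  have sub: "Fock_var p \<subseteq> Fock_var q"
  proof
    fix f assume f: "f \<in> Fock_var p"
    obtain c where c: "c \<in> Sp f" using ne[OF f] by blast
    have cpos: "c > 0" using c by (simp add: Sp_def)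
    have "C * c \<in> Sq f" by (rule trans[OF f c])
    then have m: "fock_modular q (\<lambda>z. f z / of_real (C * c)) \<le> 1" by (simp add: Sq_def)
    have eq: "(\<lambda>z. of_real (1 / (C * c)) * f z) = (\<lambda>z. f z / of_real (C * c))"
      using C cpos by (auto simp: field_simps)
    have "fock_modular q (\<lambda>z. of_real (1 / (C * c)) * f z) < \<infinity>"
      unfolding eq using m by (simp add: order_le_less_trans)
    moreover have "1 / (C * c) > 0" using C cpos by simp
    ultimately have "\<exists>c'>0. fock_modular q (\<lambda>z. of_real c' * f z) < \<infinity>" by blast
    then show "f \<in> Fock_var q"
      using f unfolding Fock_var_def Lp_var_def by blast
  qed
  have "Lp_var_norm q f \<le> C * Lp_var_norm p f" if f: "f \<in> Fock_var p" for f
  proof -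
    have bdd: "bdd_below (Sq f)" by (auto simp: Sq_def bdd_below_def intro!: exI[of _ 0])
    have "Lp_var_norm q f / C \<le> c" if "c \<in> Sp f" for c
    proof -
      have "Lp_var_norm q f \<le> C * c"
        unfolding Lp_var_norm_def Sq_def[symmetric] by (rule cInf_lower[OF trans[OF f that] bdd])
      then show ?thesis using C by (simp add: divide_le_eq mult.commute)
    qed
    then have "Lp_var_norm q f / C \<le> Inf (Sp f)"
      by (intro cInf_greatest ne[OF f]) 
    then show ?thesis using C by (simp add: Lp_var_norm_def Sp_def divide_le_eq mult.commute)
  qed
  then show ?thesis using sub C(3) by blast
qed

end
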